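(* Let $c,m\in\mathbb{Z}_{\ge0}$. Let $\mathrm{Sym}$ act on $\mathbb{Z}^{(\mathbb{N}\times[c])}\oplus\mathbb{Z}^m$ by $\sigma(\mathbf{u},\mathbf{v})=(\sigma(\mathbf{u}),\mathbf{v})$. Then every $\mathrm{Sym}$-invariant lattice in $\mathbb{Z}^{(\mathbb{N}\times[c])}\oplus\mathbb{Z}^m$ has a finite equivariant Graver basis.
   Context: $\mathbb{N}=\{1,2,\dots\}$, $[c]=\{1,\dots,c\}$ (empty if $c=0$). $\mathbb{Z}^{(\mathbb{N}\times[c])}$ is the free abelian group with basis $\mathbb{N}\times[c]$ (standard basis $\mathbf{e}_{i,j}$); $\mathbb{Z}^{(\mathbb{N}\times[c])}\oplus\mathbb{Z}^m$ is viewed as the free abelian group on the disjoint union $(\mathbb{N}\times[c])\sqcup[m]$; a lattice is a subgroup. $\mathrm{Sym}$ is the group of permutations of $\mathbb{N}$ fixing all but finitely many points, acting on $\mathbb{Z}^{(\mathbb{N}\times[c])}$ by linear extension of $\sigma(\mathbf{e}_{i,j})=\mathbf{e}_{\sigma(i),j}$. $\mathbf{u}\sqsubseteq\mathbf{v}$ iff $u_kv_k\ge0$ and $|u_k|\le|v_k|$ for every coordinate $k$; the Graver basis of a lattice $L$ is the set of $\sqsubseteq$-minimal elements of $L\setminus\{\mathbf{0}\}$; $\mathcal{G}\subseteq L$ is an equivariant Graver basis if $\{\sigma(\mathbf{g})\mid\sigma\in\mathrm{Sym},\mathbf{g}\in\mathcal{G}\}$ is the Graver basis of $L$. *)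

theory Defs
  imports Main "HOL-Library.Function_Algebras"
begin

text \<open>Index set of Z^(N x [c]) (+) Z^m, realised as a subset of the type
  (nat \<times> nat) + nat: Inl (i,j) with i \<ge> 1, 1 \<le> j \<le> c, and Inr k with 1 \<le> k \<le> m.\<close>

type_synonym vec = "(nat \<times> nat) + nat \<Rightarrow> int"

definition index_set :: "nat \<Rightarrow> nat \<Rightarrow> ((nat \<times> nat) + nat) set" where
  "index_set c m = Inl ` ({1..} \<times> {1..c}) \<union> Inr ` {1..m}"

definition ambient :: "nat \<Rightarrow> nat \<Rightarrow> vec set" where
  "ambient c m = {x. finite {k. x k \<noteq> 0} \<and> (\<forall>k. x k \<noteq> 0 \<longrightarrow> k \<in> index_set c m)}"

definition is_lattice :: "nat \<Rightarrow> nat \<Rightarrow> vec set \<Rightarrow> bool" where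
  "is_lattice c m L \<longleftrightarrow> L \<subseteq> ambient c m \<and> 0 \<in> L \<and>
     (\<forall>x\<in>L. \<forall>y\<in>L. x + y \<in> L) \<and> (\<forall>x\<in>L. - x \<in> L)"

text \<open>Sym: permutations of N = {1,2,...} fixing all but finitely many points
  (extended to nat by fixing 0).\<close>
definition Sym :: "(nat \<Rightarrow> nat) set" where
  "Sym = {\<sigma>. bij \<sigma> \<and> \<sigma> 0 = 0 \<and> finite {i. \<sigma> i \<noteq> i}}"

text \<open>Action: sigma(e_{i,j}) = e_{sigma(i),j} extended linearly, trivial on Z^m.\<close>
definition act :: "(nat \<Rightarrow> nat) \<Rightarrow> vec \<Rightarrow> vec" where
  "act \<sigma> x = (\<lambda>k. case k of Inl (i, j) \<Rightarrow> x (Inl (inv \<sigma> i, j)) | Inr l \<Rightarrow> x (Inr l))"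

definition sym_invariant :: "vec set \<Rightarrow> bool" where
  "sym_invariant L \<longleftrightarrow> (\<forall>\<sigma>\<in>Sym. \<forall>x\<in>L. act \<sigma> x \<in> L)"

definition conf_le :: "vec \<Rightarrow> vec \<Rightarrow> bool" (infix "\<sqsubseteq>" 50) where
  "u \<sqsubseteq> v \<longleftrightarrow> (\<forall>k. u k * v k \<ge> 0 \<and> \<bar>u k\<bar> \<le> \<bar>v k\<bar>)"

definition graver_basis :: "vec set \<Rightarrow> vec set" where
  "graver_basis L = {u \<in> L - {0}. \<not> (\<exists>v \<in> L - {0}. v \<sqsubseteq> u \<and> v \<noteq> u)}"

definition equivariant_graver_basis :: "vec set \<Rightarrow> vec set \<Rightarrow> bool" where
  "equivariant_graver_basis L G \<longleftrightarrow> G \<subseteq> L \<and>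
     {act \<sigma> g | \<sigma> g. \<sigma> \<in> Sym \<and> g \<in> G} = graver_basis L"

end

theory Submission
  imports Defs "HOL-Library.Ramsey"
begin

definition almf :: "('a \<Rightarrow> 'a \<Rightarrow> bool) \<Rightarrow> 'a set \<Rightarrow> bool" where
  "almf R A \<longleftrightarrow> (\<forall>f::nat \<Rightarrow> 'a. (\<forall>i. f i \<in> A) \<longrightarrow> (\<exists>i j. i < j \<and> R (f i) (f j)))"

lemma almfD: "almf R A \<Longrightarrow> (\<And>i::nat. f i \<in> A) \<Longrightarrow> \<exists>i j::nat. i < j \<and> R (f i) (f j)"
  unfolding almf_def by blast

lemma af_nat: "almf (\<le>) (UNIV :: nat set)"
  unfolding almf_def
proof (intro allI impI)
  fix f :: "nat \<Rightarrow> nat"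
  obtain i where i: "\<forall>k. f i \<le> f k"
    using ex_has_least_nat[of "\<lambda>x. True" 0 f] by blast
  show "\<exists>i j. i < j \<and> f i \<le> f j"
    using i by (intro exI[of _ i] exI[of _ "Suc i"]) auto
qed

lemma af_map:
  assumes "almf R A" "\<And>x. x \<in> A' \<Longrightarrow> h x \<in> A"
    "\<And>x y. x \<in> A' \<Longrightarrow> y \<in> A' \<Longrightarrow> R (h x) (h y) \<Longrightarrow> R' x y"
  shows "almf R' A'"
  unfolding almf_def
proof (intro allI impI)
  fix f :: "nat \<Rightarrow> _" assume f: "\<forall>i. f i \<in> A'"
  then obtain i j where "i < j" "R (h (f i)) (h (f j))"
    using almfD[OF assms(1), of "h \<circ> f"] assms(2) by auto
  then show "\<exists>i j. i < j \<and> R' (f i) (f j)" using assms(3) f by blast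
qed

lemma af_ramsey:
  fixes f :: "nat \<Rightarrow> 'a"
  assumes "almf R A" "\<And>i. f i \<in> A"
  shows "\<exists>\<phi>::nat\<Rightarrow>nat. strict_mono \<phi> \<and> (\<forall>i j. i < j \<longrightarrow> R (f (\<phi> i)) (f (\<phi> j)))"
proof -
  define col :: "nat set \<Rightarrow> nat" where
    "col X = (if R (f (Min X)) (f (Max X)) then 0 else 1)" for X
  have "\<forall>x\<in>UNIV. \<forall>y\<in>UNIV. x \<noteq> y \<longrightarrow> col {x, y} < 2" by (simp add: col_def)
  from Ramsey2[OF infinite_UNIV_nat this] obtain Y t where Y: "infinite Y" "t < 2"
    and c: "\<forall>x\<in>Y. \<forall>y\<in>Y. x \<noteq> y \<longrightarrow> col {x, y} = t"
    by blast
  define e where "e = enumerate Y"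
  have sm: "strict_mono e" unfolding e_def strict_mono_def
    using enumerate_mono Y(1) by blast
  have eY: "e i \<in> Y" for i unfolding e_def using enumerate_in_set Y(1) by blast
  have cc: "col {e i, e j} = (if R (f (e i)) (f (e j)) then 0 else 1)" if "i < j" for i j
  proof -
    have "e i < e j" using sm that strict_mono_less by blast
    then show ?thesis by (simp add: col_def min_def max_def)
  qed
  obtain i j where ij: "i < j" "R (f (e i)) (f (e j))"
    using almfD[OF assms(1), of "f \<circ> e"] assms(2) by auto
  have "e i \<noteq> e j" using strict_mono_less[OF sm] ij(1) by (metis less_irrefl)
  moreover have "col {e i, e j} = 0" using cc[OF ij(1)] ij(2) by simp
  ultimately have "t = 0" using c eY by metis
  have allR: "R (f (e i)) (f (e j))" if "i < j" for i j
  proof -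
    have "e i \<noteq> e j" using strict_mono_less[OF sm] that by (metis less_irrefl)
    then have "col {e i, e j} = 0" using c eY \<open>t = 0\<close> by blast
    then show ?thesis using cc[OF that] by (simp split: if_splits)
  qed
  show ?thesis
    by (rule exI[of _ e]) (use sm allR in blast)
qed

lemma af_prod:
  assumes "almf R1 A1" "almf R2 A2"
  shows "almf (\<lambda>x y. R1 (fst x) (fst y) \<and> R2 (snd x) (snd y)) (A1 \<times> A2)"
  unfolding almf_def
proof (intro allI impI)
  fix f :: "nat \<Rightarrow> 'a \<times> 'b" assume f: "\<forall>i. f i \<in> A1 \<times> A2"
  obtain \<phi> :: "nat \<Rightarrow> nat" where \<phi>: "strict_mono \<phi>" "\<forall>i j. i < j \<longrightarrow> R1 (fst (f (\<phi> i))) (fst (f (\<phi> j)))"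
    using af_ramsey[OF assms(1), of "fst \<circ> f"] f by (auto simp: mem_Times_iff)
  obtain i j where ij: "i < j" "R2 (snd (f (\<phi> i))) (snd (f (\<phi> j)))"
    using almfD[OF assms(2), of "snd \<circ> f \<circ> \<phi>"] f by (auto simp: mem_Times_iff)
  show "\<exists>i j. i < j \<and> R1 (fst (f i)) (fst (f j)) \<and> R2 (snd (f i)) (snd (f j))"
  proof (intro exI conjI)
    show "\<phi> i < \<phi> j" using ij(1) \<phi>(1) by (simp add: strict_mono_less)
    show "R1 (fst (f (\<phi> i))) (fst (f (\<phi> j)))" using ij(1) \<phi>(2) by blast
    show "R2 (snd (f (\<phi> i))) (snd (f (\<phi> j)))" by (rule ij(2))
  qed
qed

definition cz :: "int \<Rightarrow> int \<Rightarrow> bool" where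
  "cz a b \<longleftrightarrow> 0 \<le> a * b \<and> \<bar>a\<bar> \<le> \<bar>b\<bar>"

lemma cz_nat: "nat x \<le> nat y \<Longrightarrow> nat (- x) \<le> nat (- y) \<Longrightarrow> cz x y"
  unfolding cz_def
proof -
  assume a: "nat x \<le> nat y" "nat (- x) \<le> nat (- y)"
  consider "x > 0" | "x = 0" | "x < 0" by linarith
  then show "0 \<le> x * y \<and> \<bar>x\<bar> \<le> \<bar>y\<bar>"
  proof cases
    case 1
    then have "x \<le> y" using a(1) by (metis nat_le_eq_zle)
    then show ?thesis using 1 by auto
  next
    case 2 then show ?thesis by simp
  next
    case 3
    then have "- x \<le> - y" using a(2) by (metis nat_le_eq_zle neg_0_less_iff_less)
    then have "y \<le> x" "y < 0" using 3 by linarith+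
    then show ?thesis using 3 by (simp add: mult_nonpos_nonpos)
  qed
qed

lemma af_cz: "almf cz UNIV"
proof -
  have *: "almf (\<lambda>x y. fst x \<le> fst y \<and> snd x \<le> snd y) ((UNIV :: nat set) \<times> (UNIV :: nat set))"
    by (rule af_prod[OF af_nat af_nat])
  show ?thesis
  proof (rule af_map[OF *, of _ "\<lambda>a. (nat a, nat (- a))"])
    fix x y :: int assume "fst (nat x, nat (- x)) \<le> fst (nat y, nat (- y)) \<and>
       snd (nat x, nat (- x)) \<le> snd (nat y, nat (- y))"
    then show "cz x y" using cz_nat by simp
  qed auto
qed

lemma af_czfun: "almf (\<lambda>u v. \<forall>j<n. cz (u j) (v j)) (UNIV :: (nat \<Rightarrow> int) set)"
proof (induction n)
  case 0
  show ?case unfolding almf_def by (intro allI impI exI[of _ 0] exI[of _ 1]) auto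
next
  case (Suc n)
  show ?case
  proof (rule af_map[OF af_prod[OF Suc.IH af_cz], of _ "\<lambda>u. (u, u n)"])
    fix x y :: "nat \<Rightarrow> int"
    assume "(\<forall>j<n. cz (fst (x, x n) j) (fst (y, y n) j)) \<and> cz (snd (x, x n)) (snd (y, y n))"
    then show "\<forall>j<Suc n. cz (x j) (y j)" using less_Suc_eq by auto
  qed auto
qed

primrec build :: "('a list \<Rightarrow> 'a) \<Rightarrow> nat \<Rightarrow> 'a list" where
  "build nx 0 = []"
| "build nx (Suc n) = build nx n @ [nx (build nx n)]"

lemma length_build [simp]: "length (build nx n) = n"
  by (induction n) simp_all

lemma build_map: "build nx n = map (\<lambda>k. nx (build nx k)) [0..<n]"
proof (induction n)
  case 0 show ?case by simp
next
  case (Suc n)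
  have "build nx (Suc n) = build nx n @ [nx (build nx n)]" by simp
  also have "\<dots> = map (\<lambda>k. nx (build nx k)) [0..<n] @ [nx (build nx n)]"
    using Suc.IH by (rule arg_cong)
  also have "\<dots> = map (\<lambda>k. nx (build nx k)) [0..<Suc n]" by simp
  finally show ?case .
qed

lemma build_nth: "k < n \<Longrightarrow> build nx n ! k = nx (build nx k)"
  by (subst build_map) simp


definition emb :: "('b \<Rightarrow> 'b \<Rightarrow> bool) \<Rightarrow> nat set \<times> (nat \<Rightarrow> 'b) \<Rightarrow> nat set \<times> (nat \<Rightarrow> 'b) \<Rightarrow> bool" where
  "emb R x y \<longleftrightarrow> (\<exists>p. inj_on p (fst x) \<and> p ` fst x \<subseteq> fst y \<and> (\<forall>i\<in>fst x. R (snd x i) (snd y (p i))))"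

definition MS :: "'b set \<Rightarrow> (nat set \<times> (nat \<Rightarrow> 'b)) set" where
  "MS B = {x. finite (fst x) \<and> (\<forall>i\<in>fst x. snd x i \<in> B)}"

lemma af_emb:
  fixes R :: "'b \<Rightarrow> 'b \<Rightarrow> bool"
  assumes afR: "almf R B"
  shows "almf (emb R) (MS B)"
proof (rule ccontr)
  define bad where "bad f \<longleftrightarrow> (\<forall>i. f i \<in> MS B) \<and> (\<forall>i j. i < j \<longrightarrow> \<not> emb R (f i) (f j))"
    for f :: "nat \<Rightarrow> nat set \<times> (nat \<Rightarrow> 'b)"
  define ext where "ext p g \<longleftrightarrow> (\<forall>k<length p. g k = p ! k)"
    for p :: "(nat set \<times> (nat \<Rightarrow> 'b)) list" and g :: "nat \<Rightarrow> nat set \<times> (nat \<Rightarrow> 'b)"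
  define P where "P p x \<longleftrightarrow> (\<exists>g. bad g \<and> ext p g \<and> g (length p) = x)" for p x
  define nextm where "nextm p = arg_min (card \<circ> fst) (P p)" for p
  define f where "f k = nextm (build nextm k)" for k
  have nm: "P p (nextm p) \<and> card (fst (nextm p)) \<le> card (fst x)" if "P p x" for p x
  proof -
    have "P p (nextm p) \<and> (\<forall>y. P p y \<longrightarrow> (card \<circ> fst) (nextm p) \<le> (card \<circ> fst) y)"
      unfolding nextm_def by (rule arg_min_nat_lemma[of "P p" x "card \<circ> fst", OF that])
    then show ?thesis using that by (metis comp_apply)
  qed
  assume "\<not> almf (emb R) (MS B)"
  then obtain f0 where "bad f0" unfolding almf_def bad_def by blast
  have inv: "\<exists>g. bad g \<and> ext (build nextm n) g" for n
  proof (induction n)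
    case 0
    then show ?case using \<open>bad f0\<close> by (auto simp: ext_def)
  next
    case (Suc n)
    then obtain g where g: "bad g" "ext (build nextm n) g" by blast
    then have "P (build nextm n) (g n)" unfolding P_def by auto
    then have "P (build nextm n) (nextm (build nextm n))" using nm by blast
    then obtain g' where g': "bad g'" "ext (build nextm n) g'" "g' n = nextm (build nextm n)"
      unfolding P_def by auto
    have "ext (build nextm (Suc n)) g'"
      unfolding ext_def
    proof (intro allI impI)
      fix k assume "k < length (build nextm (Suc n))"
      then have "k < n \<or> k = n" by auto
      then show "g' k = build nextm (Suc n) ! k"
      proof
        assume "k < n" then show ?thesis using g'(2) by (simp add: ext_def nth_append)
      next
        assume "k = n" then show ?thesis using g'(3) by (simp add: nth_append)
      qed
    qed
    then show ?case using g'(1) by blast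
  qed
  have bnth: "build nextm n ! k = f k" if "k < n" for n k
    using that by (simp add: build_nth f_def)
  have ext_f: "ext (build nextm n) g \<longleftrightarrow> (\<forall>k<n. g k = f k)" for n g
    by (simp add: ext_def bnth)
  have fbad: "bad f"
    unfolding bad_def
  proof (intro conjI allI impI)
    fix i
    obtain g where "bad g" "ext (build nextm (Suc i)) g" using inv by blast
    then have "g i = f i" "g i \<in> MS B" unfolding ext_f bad_def by blast+
    then show "f i \<in> MS B" by simp
  next
    fix i j :: nat assume "i < j"
    obtain g where "bad g" "ext (build nextm (Suc j)) g" using inv by blast
    then have "g i = f i" "g j = f j" "\<not> emb R (g i) (g j)"
      unfolding ext_f bad_def using \<open>i < j\<close> by (blast intro: less_SucI)+
    then show "\<not> emb R (f i) (f j)" by simp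
  qed
  have fmin: "card (fst (f n)) \<le> card (fst (h n))" if "bad h" "\<forall>k<n. h k = f k" for h n
  proof -
    have "ext (build nextm n) h" using ext_f that(2) by blast
    then have "P (build nextm n) (h n)" unfolding P_def using that(1) by auto
    then have "card (fst (nextm (build nextm n))) \<le> card (fst (h n))" using nm by blast
    then show ?thesis by (simp add: f_def)
  qed
  have fMS: "f n \<in> MS B" for n using fbad unfolding bad_def by blast
  have ne: "fst (f n) \<noteq> {}" for n
  proof
    assume "fst (f n) = {}"
    then have "emb R (f n) (f (Suc n))" unfolding emb_def by (intro exI[of _ id]) simp
    then show False using fbad lessI unfolding bad_def by blast
  qed
  define a where "a n = (SOME a. a \<in> fst (f n))" for n
  have a: "a n \<in> fst (f n)" for n unfolding a_def using ne by (simp add: some_in_eq)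
  define b where "b n = snd (f n) (a n)" for n
  have bB: "b n \<in> B" for n using fMS a unfolding MS_def b_def by auto
  obtain \<phi> :: "nat \<Rightarrow> nat" where \<phi>: "strict_mono \<phi>" "\<And>i j. i < j \<Longrightarrow> R (b (\<phi> i)) (b (\<phi> j))"
    using af_ramsey[OF afR, of b] bB by blast
  define n0 where "n0 = \<phi> 0"
  define h where "h k = (if k < n0 then f k else
     (fst (f (\<phi> (k - n0))) - {a (\<phi> (k - n0))}, snd (f (\<phi> (k - n0)))))" for k
  have hMS: "h k \<in> MS B" for k
    using fMS[of k] fMS[of "\<phi> (k - n0)"] unfolding h_def MS_def by auto
  have "\<not> bad h"
  proof
    assume "bad h"
    moreover have "\<forall>k<n0. h k = f k" by (simp add: h_def)
    ultimately have "card (fst (f n0)) \<le> card (fst (h n0))" by (rule fmin)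
    moreover have "card (fst (h n0)) < card (fst (f n0))"
    proof -
      have "h n0 = (fst (f n0) - {a n0}, snd (f n0))" unfolding h_def n0_def by simp
      moreover have "finite (fst (f n0))" using fMS[of n0] unfolding MS_def by simp
      moreover have "card (fst (f n0)) > 0" using a[of n0] \<open>finite (fst (f n0))\<close> card_gt_0_iff by blast
      ultimately show ?thesis using a[of n0] by simp
    qed
    ultimately show False by simp
  qed
  then obtain i j where ij: "i < j" "emb R (h i) (h j)" using hMS unfolding bad_def by blast
  have phimono: "\<phi> 0 \<le> \<phi> k" for k using \<phi>(1) by (simp add: strict_mono_less_eq)
  show False
  proof (cases "j < n0")
    case True
    then have "emb R (f i) (f j)" using ij by (simp add: h_def)
    then show False using fbad ij(1) unfolding bad_def by blast
  next
    case jge: False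
    show False
    proof (cases "i < n0")
      case True
      then have "emb R (f i) (fst (f (\<phi> (j - n0))) - {a (\<phi> (j - n0))}, snd (f (\<phi> (j - n0))))"
        using ij jge by (simp add: h_def)
      then obtain p where "inj_on p (fst (f i))"
        "p ` fst (f i) \<subseteq> fst (f (\<phi> (j - n0))) - {a (\<phi> (j - n0))}"
        "\<forall>k\<in>fst (f i). R (snd (f i) k) (snd (f (\<phi> (j - n0))) (p k))"
        unfolding emb_def by auto
      then have "emb R (f i) (f (\<phi> (j - n0)))" unfolding emb_def
        by (intro exI[of _ p]) blast
      moreover have "i < \<phi> (j - n0)" using True phimono n0_def
        using order_less_le_trans by blast
      ultimately show False using fbad unfolding bad_def by blast
    next
      case ige: False
      define i' where "i' = \<phi> (i - n0)"
      define j' where "j' = \<phi> (j - n0)"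
      have "i - n0 < j - n0" using ij(1) ige jge by auto
      then have ij': "i' < j'" "R (b i') (b j')" unfolding i'_def j'_def
        using \<phi> strict_mono_less by blast+
      have "emb R (fst (f i') - {a i'}, snd (f i')) (fst (f j') - {a j'}, snd (f j'))"
        using ij ige jge unfolding h_def i'_def j'_def by simp
      then obtain p where p: "inj_on p (fst (f i') - {a i'})"
        "p ` (fst (f i') - {a i'}) \<subseteq> fst (f j') - {a j'}"
        "\<forall>k\<in>fst (f i') - {a i'}. R (snd (f i') k) (snd (f j') (p k))"
        unfolding emb_def by auto
      define q where "q = p(a i' := a j')"
      have "inj_on q (fst (f i'))"
      proof -
        have "inj_on q (fst (f i') - {a i'})" unfolding q_def using p(1)
          by (simp add: inj_on_def)
        moreover have "q (a i') \<notin> q ` (fst (f i') - {a i'})" unfolding q_def using p(2) by auto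
        ultimately have "inj_on q (insert (a i') (fst (f i') - {a i'}))" using inj_on_insert[of q "a i'" "fst (f i') - {a i'}"] by (metis Diff_idemp)
        then show ?thesis using a[of i'] by (metis insert_Diff)
      qed
      moreover have "q ` fst (f i') \<subseteq> fst (f j')" unfolding q_def using p(2) a[of j'] by auto
      moreover have "\<forall>k\<in>fst (f i'). R (snd (f i') k) (snd (f j') (q k))"
        unfolding q_def using p(3) ij'(2) unfolding b_def by auto
      ultimately have "emb R (f i') (f j')" unfolding emb_def by (intro exI[of _ q]) blast
      then show False using fbad ij'(1) unfolding bad_def by blast
    qed
  qed
qed

lemma perm_ext:
  assumes "finite S" "inj_on p S" "0 \<notin> S" "0 \<notin> p ` S"
  shows "\<exists>\<sigma>\<in>Sym. \<forall>i\<in>S. \<sigma> i = p i"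
proof -
  define T where "T = S \<union> p ` S"
  have fT: "finite T" using assms(1) unfolding T_def by simp
  have cS: "card (p ` S) = card S" using assms(2) by (simp add: card_image)
  have "card (T - S) = card (T - p ` S)"
    using fT cS unfolding T_def
    by (simp add: card_Diff_subset assms(1))
  then obtain q where q: "bij_betw q (T - S) (T - p ` S)"
    using finite_same_card_bij fT by (meson finite_Diff)
  define \<sigma> where "\<sigma> i = (if i \<in> S then p i else if i \<in> T then q i else i)" for i
  have b1: "bij_betw \<sigma> S (p ` S)"
    using inj_on_imp_bij_betw[OF assms(2)] bij_betw_cong[of S \<sigma> p] unfolding \<sigma>_def by simp
  have b2: "bij_betw \<sigma> (T - S) (T - p ` S)"
    using q bij_betw_cong[of "T - S" \<sigma> q] unfolding \<sigma>_def by simp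
  have b3: "bij_betw \<sigma> (- T) (- T)"
    using bij_betw_id bij_betw_cong[of "- T" \<sigma> id] unfolding \<sigma>_def T_def by auto
  have "bij_betw \<sigma> (S \<union> (T - S)) (p ` S \<union> (T - p ` S))"
    by (rule bij_betw_combine[OF b1 b2]) blast
  moreover have "S \<union> (T - S) = T" "p ` S \<union> (T - p ` S) = T" unfolding T_def by auto
  ultimately have "bij_betw \<sigma> T T" by simp
  then have "bij_betw \<sigma> (T \<union> - T) (T \<union> - T)"
    using bij_betw_combine[OF _ b3] by blast
  then have "bij \<sigma>" by simp
  moreover have "\<sigma> 0 = 0" using assms(3,4) unfolding \<sigma>_def T_def by simp
  moreover have "finite {i. \<sigma> i \<noteq> i}"
    using fT by (rule finite_subset[rotated]) (auto simp: \<sigma>_def T_def)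
  ultimately have "\<sigma> \<in> Sym" unfolding Sym_def by blast
  moreover have "\<forall>i\<in>S. \<sigma> i = p i" unfolding \<sigma>_def by simp
  ultimately show ?thesis by blast
qed

definition colsupp :: "vec \<Rightarrow> nat set" where
  "colsupp x = {i. \<exists>j. x (Inl (i, j)) \<noteq> 0}"

definition col :: "vec \<Rightarrow> nat \<Rightarrow> nat \<Rightarrow> int" where
  "col x i = (\<lambda>j. x (Inl (i, j)))"

definition tailv :: "vec \<Rightarrow> nat \<Rightarrow> int" where
  "tailv x = (\<lambda>l. x (Inr l))"

lemma ambient_Inl: "x \<in> ambient c m \<Longrightarrow> x (Inl (i, j)) \<noteq> 0 \<Longrightarrow> 1 \<le> i \<and> 1 \<le> j \<and> j \<le> c"
  unfolding ambient_def index_set_def by auto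

lemma ambient_Inr: "x \<in> ambient c m \<Longrightarrow> x (Inr l) \<noteq> 0 \<Longrightarrow> 1 \<le> l \<and> l \<le> m"
  unfolding ambient_def index_set_def by auto

lemma finite_colsupp:
  assumes "x \<in> ambient c m" shows "finite (colsupp x)"
proof -
  have "colsupp x \<subseteq> (\<lambda>k. case k of Inl ij \<Rightarrow> fst ij | Inr _ \<Rightarrow> 0) ` {k. x k \<noteq> 0}"
    unfolding colsupp_def by (force intro: image_eqI[where x = "Inl (_, _)"])
  moreover have "finite {k. x k \<noteq> 0}" using assms unfolding ambient_def by simp
  ultimately show ?thesis using finite_subset by blast
qed

lemma colsupp_pos: "x \<in> ambient c m \<Longrightarrow> i \<in> colsupp x \<Longrightarrow> i \<noteq> 0"
  unfolding colsupp_def using ambient_Inl by fastforce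

lemma cz0: "cz 0 b" by (simp add: cz_def)

lemma Q_act:
  assumes x: "x \<in> ambient c m" and y: "y \<in> ambient c m"
    and e: "emb (\<lambda>u v. \<forall>j<Suc c. cz (u j) (v j)) (colsupp x, col x) (colsupp y, col y)"
    and t: "\<forall>l<Suc m. cz (tailv x l) (tailv y l)"
  shows "\<exists>\<sigma>\<in>Sym. act \<sigma> x \<sqsubseteq> y"
proof -
  obtain p where p: "inj_on p (colsupp x)" "p ` colsupp x \<subseteq> colsupp y"
    "\<And>i. i \<in> colsupp x \<Longrightarrow> \<forall>j<Suc c. cz (col x i j) (col y (p i) j)"
    using e unfolding emb_def by auto
  have "0 \<notin> colsupp x" using colsupp_pos[OF x] by blast
  moreover have "0 \<notin> p ` colsupp x" using colsupp_pos[OF y] p(2) by blast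
  ultimately obtain \<sigma> where \<sigma>: "\<sigma> \<in> Sym" "\<And>i. i \<in> colsupp x \<Longrightarrow> \<sigma> i = p i"
    using perm_ext[OF finite_colsupp[OF x] p(1)] by blast
  have bij: "bij \<sigma>" using \<sigma>(1) unfolding Sym_def by simp
  have "cz (act \<sigma> x k) (y k)" for k
  proof (cases k)
    case (Inl ij)
    obtain i j where ij: "ij = (i, j)" by (cases ij)
    define i' where "i' = inv \<sigma> i"
    have si: "\<sigma> i' = i" unfolding i'_def using bij by (simp add: bij_is_surj surj_f_inv_f)
    have ak: "act \<sigma> x k = x (Inl (i', j))" unfolding act_def Inl ij i'_def by simp
    show ?thesis
    proof (cases "x (Inl (i', j)) = 0")
      case True then show ?thesis using ak cz0 by simp
    next
      case False
      then have "i' \<in> colsupp x" unfolding colsupp_def by blast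
      moreover have "j < Suc c" using ambient_Inl[OF x False] by simp
      ultimately have "cz (col x i' j) (col y (p i') j)" using p(3) by blast
      moreover have "p i' = i" using \<sigma>(2)[OF \<open>i' \<in> colsupp x\<close>] si by simp
      ultimately show ?thesis using ak unfolding col_def Inl ij by simp
    qed
  next
    case (Inr l)
    have ak: "act \<sigma> x k = x (Inr l)" unfolding act_def Inr by simp
    show ?thesis
    proof (cases "x (Inr l) = 0")
      case True then show ?thesis using ak cz0 by simp
    next
      case False
      then have "l < Suc m" using ambient_Inr[OF x False] by simp
      then show ?thesis using t ak unfolding tailv_def Inr by simp
    qed
  qed
  then have "act \<sigma> x \<sqsubseteq> y" unfolding conf_le_def cz_def by blast
  then show ?thesis using \<sigma>(1) by blast
qed

lemma af_vec: "almf (\<lambda>x y. \<exists>\<sigma>\<in>Sym. act \<sigma> x \<sqsubseteq> y) (ambient c m)"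
proof (rule af_map[OF af_prod[OF af_emb[OF af_czfun[of "Suc c"]] af_czfun[of "Suc m"]],
      of _ "\<lambda>x. ((colsupp x, col x), tailv x)"])
  fix x assume "x \<in> ambient c m"
  then show "((colsupp x, col x), tailv x) \<in> MS UNIV \<times> UNIV"
    unfolding MS_def using finite_colsupp by auto
next
  fix x y assume "x \<in> ambient c m" "y \<in> ambient c m"
    "emb (\<lambda>u v. \<forall>j<Suc c. cz (u j) (v j)) (fst ((colsupp x, col x), tailv x)) (fst ((colsupp y, col y), tailv y)) \<and>
     (\<forall>j<Suc m. cz (snd ((colsupp x, col x), tailv x) j) (snd ((colsupp y, col y), tailv y) j))"
  then show "\<exists>\<sigma>\<in>Sym. act \<sigma> x \<sqsubseteq> y" using Q_act by simp
qed

lemma Sym_bij: "\<sigma> \<in> Sym \<Longrightarrow> bij \<sigma>" unfolding Sym_def by simp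

lemma inv_Sym:
  assumes "\<sigma> \<in> Sym" shows "inv \<sigma> \<in> Sym"
proof -
  have b: "bij \<sigma>" "\<sigma> 0 = 0" "finite {i. \<sigma> i \<noteq> i}" using assms unfolding Sym_def by auto
  have "bij (inv \<sigma>)" using b(1) by (rule bij_imp_bij_inv)
  moreover have "inv \<sigma> 0 = 0" using b(1,2) by (metis bij_is_inj inv_f_f)
  moreover have "{i. inv \<sigma> i \<noteq> i} = {i. \<sigma> i \<noteq> i}"
  proof -
    have "inv \<sigma> i = i \<longleftrightarrow> \<sigma> i = i" for i
      using b(1) by (metis bij_inv_eq_iff)
    then show ?thesis by blast
  qed
  ultimately show ?thesis using b(3) unfolding Sym_def by simp
qed

lemma act_inv1: "bij \<sigma> \<Longrightarrow> act (inv \<sigma>) (act \<sigma> x) = x"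
proof
  fix k assume b: "bij \<sigma>"
  show "act (inv \<sigma>) (act \<sigma> x) k = x k"
  proof (cases k)
    case (Inl ij) then show ?thesis using b
      by (cases ij) (simp add: act_def inv_inv_eq bij_is_inj inv_f_f)
  next
    case (Inr l) then show ?thesis by (simp add: act_def)
  qed
qed

lemma act_inv2: "bij \<sigma> \<Longrightarrow> act \<sigma> (act (inv \<sigma>) x) = x"
  using act_inv1[of "inv \<sigma>" x] by (simp add: bij_imp_bij_inv inv_inv_eq)

lemma act_conf: "u \<sqsubseteq> v \<Longrightarrow> act \<sigma> u \<sqsubseteq> act \<sigma> v"
  unfolding conf_le_def
proof (intro allI)
  fix k assume a: "\<forall>k. 0 \<le> u k * v k \<and> \<bar>u k\<bar> \<le> \<bar>v k\<bar>"
  show "0 \<le> act \<sigma> u k * act \<sigma> v k \<and> \<bar>act \<sigma> u k\<bar> \<le> \<bar>act \<sigma> v k\<bar>"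
  proof (cases k)
    case (Inl ij) then show ?thesis using a by (cases ij) (simp add: act_def)
  next
    case (Inr l) then show ?thesis using a by (simp add: act_def)
  qed
qed

lemma act_zero: "act \<sigma> 0 = 0"
proof
  fix k show "act \<sigma> 0 k = 0 k" by (cases k) (auto simp: act_def split: prod.splits)
qed

lemma act_nz: "bij \<sigma> \<Longrightarrow> x \<noteq> 0 \<Longrightarrow> act \<sigma> x \<noteq> 0"
  by (metis act_inv1 act_zero)

lemma graver_inv:
  assumes inv: "sym_invariant L" and g: "g \<in> graver_basis L" and s: "\<sigma> \<in> Sym"
  shows "act \<sigma> g \<in> graver_basis L"
proof -
  have b: "bij \<sigma>" using s Sym_bij by blast
  have gL: "g \<in> L" "g \<noteq> 0" and gmin: "\<And>v. v \<in> L - {0} \<Longrightarrow> v \<sqsubseteq> g \<Longrightarrow> v = g"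
    using g unfolding graver_basis_def by auto
  have "act \<sigma> g \<in> L" using inv s gL unfolding sym_invariant_def by blast
  moreover have "act \<sigma> g \<noteq> 0" using act_nz[OF b gL(2)] .
  moreover have "v = act \<sigma> g" if v: "v \<in> L - {0}" "v \<sqsubseteq> act \<sigma> g" for v
  proof -
    have "act (inv \<sigma>) v \<in> L" using inv inv_Sym[OF s] v unfolding sym_invariant_def by blast
    moreover have "act (inv \<sigma>) v \<noteq> 0" using act_nz[OF bij_imp_bij_inv[OF b]] v by blast
    moreover have "act (inv \<sigma>) v \<sqsubseteq> g" using act_conf[OF v(2), of "inv \<sigma>"] act_inv1[OF b] by simp
    ultimately have "act (inv \<sigma>) v = g" using gmin by blast
    then show ?thesis using act_inv2[OF b, of v] by simp
  qed
  ultimately show ?thesis unfolding graver_basis_def by blast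
qed

theorem lemma5p12:
  fixes c m :: nat and L :: "vec set"
  assumes "is_lattice c m L" and "sym_invariant L"
  shows "\<exists>G. finite G \<and> equivariant_graver_basis L G"
proof (rule ccontr)
  assume nG: "\<not> (\<exists>G. finite G \<and> equivariant_graver_basis L G)"
  define Gr where "Gr = graver_basis L"
  define orb where "orb G = {act \<sigma> g | \<sigma> g. \<sigma> \<in> Sym \<and> g \<in> G}" for G
  have GrL: "Gr \<subseteq> L" unfolding Gr_def graver_basis_def by auto
  have Lamb: "L \<subseteq> ambient c m" using assms(1) unfolding is_lattice_def by simp
  have claim: "\<exists>g. g \<in> Gr \<and> g \<notin> orb G" if "finite G" "G \<subseteq> Gr" for G
  proof (rule ccontr)
    assume "\<not> (\<exists>g. g \<in> Gr \<and> g \<notin> orb G)"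
    then have "Gr \<subseteq> orb G" by blast
    moreover have "orb G \<subseteq> Gr"
    proof
      fix x assume "x \<in> orb G"
      then obtain \<sigma> g where "x = act \<sigma> g" "\<sigma> \<in> Sym" "g \<in> G" unfolding orb_def by blast
      then show "x \<in> Gr" using graver_inv[OF assms(2), of g \<sigma>] that(2) unfolding Gr_def by blast
    qed
    ultimately have "orb G = Gr" by blast
    then have "equivariant_graver_basis L G"
      unfolding equivariant_graver_basis_def using that(2) GrL unfolding orb_def Gr_def by blast
    then show False using nG that(1) by blast
  qed
  define nextg where "nextg xs = (SOME g. g \<in> Gr \<and> g \<notin> orb (set xs))" for xs
  define gs where "gs k = nextg (build nextg k)" for k
  have setb: "set (build nextg n) = gs ` {..<n}" for n
  proof -
    have "set (build nextg n) = (\<lambda>k. nextg (build nextg k)) ` {0..<n}"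
      by (subst build_map) simp
    also have "\<dots> = gs ` {..<n}" by (simp add: gs_def atLeast0LessThan)
    finally show ?thesis .
  qed
  have sub: "set (build nextg n) \<subseteq> Gr" for n
  proof (induction n)
    case 0 then show ?case by simp
  next
    case (Suc n)
    have "nextg (build nextg n) \<in> Gr"
      using someI_ex[OF claim[OF finite_set Suc.IH]] unfolding nextg_def by blast
    then show ?case using Suc.IH by simp
  qed
  have gs: "gs n \<in> Gr" "gs n \<notin> orb (gs ` {..<n})" for n
  proof -
    have "gs n \<in> Gr \<and> gs n \<notin> orb (set (build nextg n))"
      using someI_ex[OF claim[OF finite_set sub]] unfolding nextg_def gs_def by blast
    then show "gs n \<in> Gr" "gs n \<notin> orb (gs ` {..<n})" using setb by auto
  qed
  have "gs n \<in> ambient c m" for n using gs(1) GrL Lamb by blast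
  then obtain i j \<sigma> where ij: "i < j" "\<sigma> \<in> Sym" "act \<sigma> (gs i) \<sqsubseteq> gs j"
    using almfD[OF af_vec[of c m], of gs] by blast
  have "act \<sigma> (gs i) \<in> L" using assms(2) ij(2) gs(1)[of i] GrL unfolding sym_invariant_def by blast
  moreover have "act \<sigma> (gs i) \<noteq> 0" using act_nz[OF Sym_bij[OF ij(2)]] gs(1)[of i]
    unfolding Gr_def graver_basis_def by blast
  ultimately have "act \<sigma> (gs i) = gs j" using gs(1)[of j] ij(3) unfolding Gr_def graver_basis_def by blast
  moreover have "gs i \<in> gs ` {..<j}" using ij(1) by simp
  ultimately have "gs j \<in> orb (gs ` {..<j})" unfolding orb_def mem_Collect_eq
    using ij(2) by (intro exI[of _ \<sigma>] exI[of _ "gs i"]) simp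
  then show False using gs(2) by blast
qed

end
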